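(* Let $S$ be a finitely generated submonoid of $\mathbb N^d$ that has a Frobenius element $\mathbf f$ and is irreducible. Then (a) $S$ is maximal (with respect to inclusion) among all submonoids of $\mathbb N^d$ having $\mathbf f$ as a Frobenius element; (b) $S$ has a unique Frobenius element.
   Context: For a submonoid $T$ of $\mathbb N^d$, $\mathrm{pos}(T)$ is the set of finite nonnegative rational combinations of elements of $T$ and $\mathcal H(T)=(\mathrm{pos}(T)\setminus T)\cap\mathbb N^d$. A term order on $\mathbb N^d$ is a total order compatible with addition with $0$ least. $\mathbf f\in\mathcal H(T)$ is a Frobenius element of $T$ if $\mathbf f=\max_\prec\mathcal H(T)$ for some term order $\prec$. A submonoid of $\mathbb N^d$ is irreducible if it cannot be expressed as the intersection of two submonoids of $\mathbb N^d$ each containing it properly. *)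

theory Defs
  imports Complex_Main "HOL-Library.Function_Algebras"
begin

text \<open>Elements of N^d are functions from a finite index type 'd to nat;
  addition and 0 are pointwise (Function_Algebras).\<close>

definition submonoid :: "('d \<Rightarrow> nat) set \<Rightarrow> bool" where
  "submonoid T \<longleftrightarrow> 0 \<in> T \<and> (\<forall>x\<in>T. \<forall>y\<in>T. x + y \<in> T)"

definition finitely_generated :: "('d \<Rightarrow> nat) set \<Rightarrow> bool" where
  "finitely_generated T \<longleftrightarrow>
     (\<exists>G. finite G \<and> T = {x. \<exists>c :: ('d \<Rightarrow> nat) \<Rightarrow> nat. x = (\<lambda>i. \<Sum>g\<in>G. c g * g i)})"

definition pos :: "('d \<Rightarrow> nat) set \<Rightarrow> ('d \<Rightarrow> rat) set" where
  "pos T = {v. \<exists>F c. finite F \<and> F \<subseteq> T \<and> (\<forall>g\<in>F. c g \<ge> (0::rat)) \<and>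
                    v = (\<lambda>i. \<Sum>g\<in>F. c g * of_nat (g i))}"

definition holes :: "('d \<Rightarrow> nat) set \<Rightarrow> ('d \<Rightarrow> nat) set" where
  "holes T = {x. (\<lambda>i. of_nat (x i) :: rat) \<in> pos T \<and> x \<notin> T}"

definition term_order :: "(('d \<Rightarrow> nat) \<Rightarrow> ('d \<Rightarrow> nat) \<Rightarrow> bool) \<Rightarrow> bool" where
  "term_order le \<longleftrightarrow>
     (\<forall>a. le a a) \<and>
     (\<forall>a b. le a b \<and> le b a \<longrightarrow> a = b) \<and>
     (\<forall>a b c. le a b \<and> le b c \<longrightarrow> le a c) \<and>
     (\<forall>a b. le a b \<or> le b a) \<and>
     (\<forall>a b c. le a b \<longrightarrow> le (a + c) (b + c)) \<and>
     (\<forall>a. le 0 a)"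

definition frobenius_element :: "('d \<Rightarrow> nat) set \<Rightarrow> ('d \<Rightarrow> nat) \<Rightarrow> bool" where
  "frobenius_element T f \<longleftrightarrow>
     f \<in> holes T \<and> (\<exists>le. term_order le \<and> (\<forall>h\<in>holes T. le h f))"

definition irreducible_monoid :: "('d \<Rightarrow> nat) set \<Rightarrow> bool" where
  "irreducible_monoid S \<longleftrightarrow> submonoid S \<and>
     \<not> (\<exists>S1 S2. submonoid S1 \<and> submonoid S2 \<and> S \<subset> S1 \<and> S \<subset> S2 \<and> S = S1 \<inter> S2)"

end

theory Submission
  imports Defs
begin

lemma pos_add:
  assumes "x \<in> pos T" "y \<in> pos T"
  shows "x + y \<in> pos T"
proof -
  obtain F1 c1 where 1: "finite F1" "F1 \<subseteq> T" "\<forall>g\<in>F1. c1 g \<ge> (0::rat)"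
    "x = (\<lambda>i. \<Sum>g\<in>F1. c1 g * of_nat (g i))" using assms(1) unfolding pos_def by blast
  obtain F2 c2 where 2: "finite F2" "F2 \<subseteq> T" "\<forall>g\<in>F2. c2 g \<ge> (0::rat)"
    "y = (\<lambda>i. \<Sum>g\<in>F2. c2 g * of_nat (g i))" using assms(2) unfolding pos_def by blast
  define c where "c g = (if g \<in> F1 then c1 g else 0) + (if g \<in> F2 then c2 g else 0)" for g
  have A: "(\<Sum>g\<in>F1 \<union> F2. (if g \<in> F1 then c1 g else 0) * of_nat (g i)) = (\<Sum>g\<in>F1. c1 g * of_nat (g i))" for i
  proof -
    have "(\<Sum>g\<in>F1 \<union> F2. (if g \<in> F1 then c1 g else 0) * of_nat (g i)) = (\<Sum>g\<in>F1 \<union> F2. (if g \<in> F1 then c1 g * of_nat (g i) else 0))"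
      by (rule sum.cong) auto
    also have "\<dots> = (\<Sum>g\<in>(F1 \<union> F2) \<inter> F1. c1 g * of_nat (g i))"
      by (rule sum.inter_restrict[symmetric]) (use 1 2 in simp)
    finally show ?thesis by (simp add: Int_absorb2)
  qed
  have B: "(\<Sum>g\<in>F1 \<union> F2. (if g \<in> F2 then c2 g else 0) * of_nat (g i)) = (\<Sum>g\<in>F2. c2 g * of_nat (g i))" for i
  proof -
    have "(\<Sum>g\<in>F1 \<union> F2. (if g \<in> F2 then c2 g else 0) * of_nat (g i)) = (\<Sum>g\<in>F1 \<union> F2. (if g \<in> F2 then c2 g * of_nat (g i) else 0))"
      by (rule sum.cong) auto
    also have "\<dots> = (\<Sum>g\<in>(F1 \<union> F2) \<inter> F2. c2 g * of_nat (g i))"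
      by (rule sum.inter_restrict[symmetric]) (use 1 2 in simp)
    finally show ?thesis by (simp add: Int_absorb1)
  qed
  have "x + y = (\<lambda>i. \<Sum>g\<in>F1 \<union> F2. c g * of_nat (g i))"
  proof (rule ext)
    fix i
    have "(x + y) i = x i + y i" by (simp only: plus_fun_def)
    also have "\<dots> = (\<Sum>g\<in>F1. c1 g * of_nat (g i)) + (\<Sum>g\<in>F2. c2 g * of_nat (g i))"
      by (simp only: 1(4) 2(4))
    also have "\<dots> = (\<Sum>g\<in>F1 \<union> F2. (if g \<in> F1 then c1 g else 0) * of_nat (g i))
        + (\<Sum>g\<in>F1 \<union> F2. (if g \<in> F2 then c2 g else 0) * of_nat (g i))"
      by (simp only: A B)
    also have "\<dots> = (\<Sum>g\<in>F1 \<union> F2. c g * of_nat (g i))"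
      unfolding c_def distrib_right by (rule sum.distrib[symmetric])
    finally show "(x + y) i = (\<Sum>g\<in>F1 \<union> F2. c g * of_nat (g i))" .
  qed
  moreover have "\<forall>g\<in>F1 \<union> F2. c g \<ge> 0" using 1(3) 2(3) by (auto simp: c_def)
  moreover have "finite (F1 \<union> F2)" "F1 \<union> F2 \<subseteq> T" using 1 2 by auto
  ultimately show ?thesis unfolding pos_def
    by (intro CollectI exI[of _ "F1 \<union> F2"] exI[of _ c] conjI)
qed

lemma elem_pos:
  assumes "s \<in> T" shows "(\<lambda>i. of_nat (s i) :: rat) \<in> pos T"
proof -
  have "(\<lambda>i. of_nat (s i) :: rat) = (\<lambda>i. \<Sum>g\<in>{s}. (\<lambda>_. 1::rat) g * of_nat (g i))" by simp
  moreover have "finite {s}" "{s} \<subseteq> T" "\<forall>g\<in>{s}. (\<lambda>_. 1::rat) g \<ge> 0" using assms by auto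
  ultimately show ?thesis unfolding pos_def
    by (intro CollectI exI[of _ "{s}"] exI[of _ "\<lambda>_. 1::rat"] conjI)
qed

lemma of_nat_add_fun: "(\<lambda>i. of_nat ((a + b) i) :: rat) = (\<lambda>i. of_nat (a i)) + (\<lambda>i. of_nat (b i))"
  by (rule ext) (simp only: plus_fun_def of_nat_add)

lemma insert_frob_submonoid:
  assumes S: "submonoid S" and F: "frobenius_element S f"
  shows "submonoid (insert f S)" and "f \<notin> S"
proof -
  from F obtain le where hf: "f \<in> holes S" and le: "term_order le" and mx: "\<forall>h\<in>holes S. le h f"
    unfolding frobenius_element_def by blast
  have fpos: "(\<lambda>i. of_nat (f i) :: rat) \<in> pos S" and fS: "f \<notin> S" using hf by (auto simp: holes_def)
  show "f \<notin> S" by fact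
  have l0: "\<And>a. le 0 a" and asym: "\<And>a b. le a b \<Longrightarrow> le b a \<Longrightarrow> a = b"
    and mono: "\<And>a b c. le a b \<Longrightarrow> le (a + c) (b + c)"
    using le unfolding term_order_def by blast+
  have key: "f + s \<in> S" if "(\<lambda>i. of_nat (s i) :: rat) \<in> pos S" "s \<noteq> 0" for s
  proof (rule ccontr)
    assume n: "f + s \<notin> S"
    have "(\<lambda>i. of_nat ((f + s) i) :: rat) \<in> pos S"
      unfolding of_nat_add_fun using pos_add[OF fpos that(1)] .
    with n have "f + s \<in> holes S" by (simp add: holes_def)
    with mx have "le (f + s) f" by blast
    moreover have "le (0 + f) (s + f)" by (rule mono[OF l0])
    hence "le f (f + s)" by (simp only: add.commute add_0_left)
    ultimately have "f + s = f" using asym by blast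
    hence "f + s = f + 0" by simp
    hence "s = 0" by (rule add_left_imp_eq)
    with that(2) show False by simp
  qed
  have f0: "f \<noteq> 0" using fS S by (auto simp: submonoid_def)
  have ff: "f + f \<in> S" using key[OF fpos f0] .
  have fs: "f + s \<in> S" "s + f \<in> S" if "s \<in> S" "s \<noteq> 0" for s
  proof -
    show "f + s \<in> S" using key[OF elem_pos[OF that(1)] that(2)] .
    thus "s + f \<in> S" by (simp only: add.commute)
  qed
  show "submonoid (insert f S)"
    unfolding submonoid_def
  proof (intro conjI ballI)
    show "0 \<in> insert f S" using S by (simp add: submonoid_def)
  next
    fix x y assume x: "x \<in> insert f S" and y: "y \<in> insert f S"
    show "x + y \<in> insert f S"
    proof (cases "x = 0 \<or> y = 0")
      case True thus ?thesis using x y by auto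
    next
      case False
      thus ?thesis using x y ff fs S unfolding submonoid_def by auto
    qed
  qed
qed

theorem proposition4p2:
  fixes S :: "('d::finite \<Rightarrow> nat) set" and f :: "'d \<Rightarrow> nat"
  assumes "submonoid S" and "finitely_generated S"
    and "frobenius_element S f" and "irreducible_monoid S"
  shows "(\<forall>T. submonoid T \<and> S \<subseteq> T \<and> frobenius_element T f \<longrightarrow> T = S)
         \<and> (\<forall>g. frobenius_element S g \<longrightarrow> g = f)"
proof -
  have irr: "\<not> (\<exists>S1 S2. submonoid S1 \<and> submonoid S2 \<and> S \<subset> S1 \<and> S \<subset> S2 \<and> S = S1 \<inter> S2)"
    using assms(4) unfolding irreducible_monoid_def by (rule conjunct2)
  note I = insert_frob_submonoid[OF assms(1) assms(3)]
  have a: "T = S" if T: "submonoid T" "S \<subseteq> T" "frobenius_element T f" for T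
  proof (rule ccontr)
    assume ne: "T \<noteq> S"
    have "f \<notin> T" using T(3) unfolding frobenius_element_def holes_def by blast
    hence "S = insert f S \<inter> T" using T(2) by auto
    moreover have "S \<subset> insert f S" using I(2) by auto
    moreover have "S \<subset> T" using T(2) ne by auto
    ultimately have "\<exists>S1 S2. submonoid S1 \<and> submonoid S2 \<and> S \<subset> S1 \<and> S \<subset> S2 \<and> S = S1 \<inter> S2"
      using I(1) T(1) by (intro exI[of _ "insert f S"] exI[of _ T] conjI)
    with irr show False by (rule notE)
  qed
  have b: "g = f" if g: "frobenius_element S g" for g
  proof (rule ccontr)
    assume ne: "g \<noteq> f"
    note J = insert_frob_submonoid[OF assms(1) g]
    have "S = insert f S \<inter> insert g S" using ne by auto
    moreover have "S \<subset> insert f S" using I(2) by auto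
    moreover have "S \<subset> insert g S" using J(2) by auto
    ultimately have "\<exists>S1 S2. submonoid S1 \<and> submonoid S2 \<and> S \<subset> S1 \<and> S \<subset> S2 \<and> S = S1 \<inter> S2"
      using I(1) J(1) by (intro exI[of _ "insert f S"] exI[of _ "insert g S"] conjI)
    with irr show False by (rule notE)
  qed
  show ?thesis using a b by blast
qed

end
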